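(* Let $q$ be a prime power, let $b\in\mathbb{F}_q[x]$ be a permutation polynomial of $\mathbb{F}_q$, let $n$ be a positive integer, and let $h, k\in\mathbb{F}_q[x]$ be such that $\gcd\left(h(x),\frac{x^n-1}{x-1}\right)=1$ and $k(\mathbb{F}_q)\subseteq\mathbb{F}_q^*$. Then for every polynomial $f\in\mathbb{F}_{q^n}[x]$ with $T_n[f](x)\equiv b(x)-h(1)\cdot k(x)\cdot x\pmod{x^q-x}$, the polynomial $$\mathcal{P}_{b,f,h,k,n}(x)=f(\mathrm{Tr}_{q^n/q}(x))+k(\mathrm{Tr}_{q^n/q}(x))\cdot L_h(x)$$ is a permutation polynomial of $\mathbb{F}_{q^n}$.
   Context: For $u(x)=\sum_{i=0}^m a_i x^i\in\mathbb{F}_q[x]$, its linearized $q$-associate is $L_u(x)=\sum_{i=0}^m a_i x^{q^i}$. $\mathrm{Tr}_{q^n/q}(x)=x+x^q+\cdots+x^{q^{n-1}}$. For $f(x)=\sum_{i=0}^d a_i x^i\in\mathbb{F}_{q^n}[x]$, $T_n[f](x)=\sum_{i=0}^d\mathrm{Tr}_{q^n/q}(a_i)x^i\in\mathbb{F}_q[x]$. A permutation polynomial of a finite field is a polynomial inducing a bijection of it. *)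

theory Defs
  imports "HOL-Computational_Algebra.Computational_Algebra"
begin

text \<open>The subfield F_q of a finite field 'a with q^n elements: the fixed points of x ~> x^q.\<close>
definition subfield_q :: "nat \<Rightarrow> 'a::{finite,field} set" where
  "subfield_q q = {x. x ^ q = x}"

definition trace_qn :: "nat \<Rightarrow> nat \<Rightarrow> 'a::{finite,field} \<Rightarrow> 'a" where
  "trace_qn q n x = (\<Sum>i<n. x ^ (q ^ i))"

definition lin_assoc :: "nat \<Rightarrow> 'a::{finite,field} poly \<Rightarrow> 'a \<Rightarrow> 'a" where
  "lin_assoc q u x = (\<Sum>i\<le>degree u. coeff u i * x ^ (q ^ i))"

definition trace_poly :: "nat \<Rightarrow> nat \<Rightarrow> 'a::{finite,field} poly \<Rightarrow> 'a poly" where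
  "trace_poly q n f = map_poly (trace_qn q n) f"

definition poly_over :: "'a::{finite,field} set \<Rightarrow> 'a poly \<Rightarrow> bool" where
  "poly_over K p \<longleftrightarrow> (\<forall>i. coeff p i \<in> K)"

end

theory Submission
  imports Defs
begin

lemma ff_pow_card: "(x::'a::{finite,field}) ^ card (UNIV :: 'a set) = x"
proof (cases "x = 0")
  case False
  have "x * (\<Prod>y\<in>UNIV-{0}. x * y) = x * x ^ (card (UNIV :: 'a set) - 1) * \<Prod>(UNIV-{0})"
    by (simp add: prod.distrib mult_ac)
  also have "x * x ^ (card (UNIV :: 'a set) - 1) = x ^ Suc (card (UNIV :: 'a set) - 1)"
    by (subst power_Suc) auto
  also have "Suc (card (UNIV :: 'a set) - 1) = card (UNIV :: 'a set)"
    using finite_UNIV_card_ge_0[where ?'a = 'a] by simp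
  also have "(\<Prod>y\<in>UNIV-{0}. x * y) = (\<Prod>y\<in>UNIV-{0}. y)"
    by (rule prod.reindex_bij_witness[of _ "\<lambda>y. y / x" "\<lambda>y. x * y"]) (use False in auto)
  finally show ?thesis
    by simp
qed (use finite_UNIV_card_ge_0[where ?'a = 'a] in auto)

lemma ff_card_zero: "of_nat (card (UNIV :: 'a::{finite,field} set)) = (0::'a)"
proof -
  have "(\<Sum>x\<in>(UNIV::'a set). x) = (\<Sum>x\<in>UNIV. x + 1)"
    by (rule sum.reindex_bij_witness[of _ "\<lambda>y. y + 1" "\<lambda>y. y - 1"]) auto
  also have "\<dots> = (\<Sum>x\<in>UNIV. x) + of_nat (card (UNIV :: 'a set))"
    by (simp add: sum.distrib)
  finally show ?thesis by simp
qed

lemma ff_char: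
  assumes "prime p" "card (UNIV :: 'a::{finite,field} set) = p ^ m" "m > 0"
  shows "CHAR('a) = p"
proof -
  have pr: "prime CHAR('a)" by (rule prime_CHAR_semidom) (simp add: finite_imp_CHAR_pos)
  have "CHAR('a) dvd p ^ m" using ff_card_zero[where 'a='a] assms(2)
    by (metis of_nat_eq_0_iff_char_dvd)
  hence "CHAR('a) dvd p" using pr prime_dvd_power by blast
  thus ?thesis using pr assms(1) by (simp add: primes_dvd_imp_eq)
qed


lemma frob_add:
  assumes "prime CHAR('a::{finite,field})" "q = CHAR('a) ^ e"
  shows "((x::'a) + y) ^ (q ^ i) = x ^ (q ^ i) + y ^ (q ^ i)"
  by (rule freshmans_dream'[OF assms(1), of _ "e * i"]) (simp add: assms(2) power_mult)

lemma frob_sum: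
  assumes "prime CHAR('a::{finite,field})" "q = CHAR('a) ^ e"
  shows "(sum (f :: _ \<Rightarrow> 'a) A) ^ (q ^ i) = (\<Sum>j\<in>A. f j ^ (q ^ i))"
  by (rule freshmans_dream_sum'[OF assms(1), of _ "e * i"]) (simp add: assms(2) power_mult)

lemma lin_assoc_N:
  assumes "degree p < N"
  shows "lin_assoc q p z = (\<Sum>i<N. coeff p i * z ^ (q ^ i))"
proof -
  have "lin_assoc q p z = (\<Sum>i<Suc (degree p). coeff p i * z ^ (q ^ i))"
    unfolding lin_assoc_def lessThan_Suc_atMost ..
  also have "\<dots> = (\<Sum>i<N. coeff p i * z ^ (q ^ i))"
    by (rule sum.mono_neutral_left) (use assms in \<open>auto simp: coeff_eq_0\<close>)
  finally show ?thesis .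
qed

lemma lin_assoc_add: "lin_assoc q (p + r) z = lin_assoc q p z + lin_assoc q r z"
proof -
  define N where "N = Suc (max (degree p) (degree r))"
  have "degree (p + r) < N" using degree_add_le_max[of p r] unfolding N_def by linarith
  thus ?thesis
    by (subst (1 2 3) lin_assoc_N[where N = N]) (auto simp: N_def sum.distrib algebra_simps)
qed

lemma lin_assoc_smult: "lin_assoc q (smult a p) z = a * lin_assoc q p z"
proof -
  define N where "N = Suc (degree p)"
  have "degree (smult a p) < N" using degree_smult_le[of a p] unfolding N_def by linarith
  thus ?thesis
    by (subst (1 2) lin_assoc_N[where N = N]) (auto simp: N_def sum_distrib_left algebra_simps)
qed

lemma lin_assoc_zero [simp]: "lin_assoc q 0 z = 0"
  by (simp add: lin_assoc_def)

lemma lin_assoc_one: "lin_assoc q 1 z = z"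
  by (simp add: lin_assoc_def)

lemma lin_assoc_pCons: "lin_assoc q (pCons a p) z = a * z + lin_assoc q p (z ^ q)"
proof -
  define N where "N = Suc (degree p)"
  have d: "degree (pCons a p) < Suc N" using degree_pCons_le[of a p] unfolding N_def by linarith
  have "lin_assoc q (pCons a p) z = (\<Sum>i<Suc N. coeff (pCons a p) i * z ^ (q ^ i))"
    by (rule lin_assoc_N[OF d])
  also have "\<dots> = a * z + (\<Sum>i<N. coeff p i * z ^ (q ^ Suc i))"
    by (subst sum.lessThan_Suc_shift) simp
  also have "(\<Sum>i<N. coeff p i * z ^ (q ^ Suc i)) = (\<Sum>i<N. coeff p i * (z ^ q) ^ (q ^ i))"
    by (simp add: power_mult)
  also have "\<dots> = lin_assoc q p (z ^ q)"
    by (rule lin_assoc_N[symmetric]) (simp add: N_def)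
  finally show ?thesis .
qed

lemma sub_pow:
  assumes "poly_over (subfield_q q) h"
  shows "coeff h i ^ (q ^ j) = coeff h i"
proof (induction j)
  case (Suc j)
  have c: "coeff h i ^ q = coeff h i" using assms by (auto simp: poly_over_def subfield_q_def)
  have "coeff h i ^ (q ^ Suc j) = (coeff h i ^ q) ^ (q ^ j)"
    by (simp add: power_mult mult.commute)
  then show ?case using c Suc by simp
qed simp

lemma lin_assoc_frob:
  assumes "prime CHAR('a::{finite,field})" "q = CHAR('a) ^ e"
    and "poly_over (subfield_q q) h"
  shows "(lin_assoc q h (z::'a)) ^ q = lin_assoc q h (z ^ q)"
proof -
  have "(lin_assoc q h z) ^ (q ^ 1) = (\<Sum>i\<le>degree h. (coeff h i * z ^ (q ^ i)) ^ (q ^ 1))"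
    unfolding lin_assoc_def by (rule frob_sum[OF assms(1,2)])
  also have "\<dots> = (\<Sum>i\<le>degree h. coeff h i * (z ^ q) ^ (q ^ i))"
    by (intro sum.cong refl)
       (simp add: power_mult_distrib sub_pow[OF assms(3), of _ 1, simplified] flip: power_mult,
        simp add: mult.commute)
  finally show ?thesis by (simp add: lin_assoc_def)
qed

lemma lin_assoc_comp:
  assumes "prime CHAR('a::{finite,field})" "q = CHAR('a) ^ e"
    and "poly_over (subfield_q q) h"
  shows "lin_assoc q (g * h) (z::'a) = lin_assoc q g (lin_assoc q h z)"
proof (induction g arbitrary: z)
  case 0
  then show ?case by simp
next
  case (pCons a g)
  have "lin_assoc q (pCons a g * h) z = a * lin_assoc q h z + lin_assoc q (pCons 0 (g * h)) z"
    by (simp add: lin_assoc_add lin_assoc_smult)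
  also have "lin_assoc q (pCons 0 (g * h)) z = lin_assoc q g (lin_assoc q h (z ^ q))"
    by (simp add: lin_assoc_pCons pCons.IH)
  also have "lin_assoc q h (z ^ q) = (lin_assoc q h z) ^ q"
    by (rule lin_assoc_frob[OF assms, symmetric])
  finally show ?case by (simp add: lin_assoc_pCons)
qed

lemma lin_assoc_zadd:
  assumes "prime CHAR('a::{finite,field})" "q = CHAR('a) ^ e"
  shows "lin_assoc q g ((x::'a) + y) = lin_assoc q g x + lin_assoc q g y"
  unfolding lin_assoc_def by (simp add: frob_add[OF assms] algebra_simps sum.distrib)

lemma lin_assoc_z0:
  assumes "q > 0"
  shows "lin_assoc q g (0::'a::{finite,field}) = 0"
proof -
  have "\<And>i. q ^ i \<noteq> 0" using assms by simp
  thus ?thesis using assms unfolding lin_assoc_def by (simp add: power_0_left)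
qed


lemma trace_add:
  assumes "prime CHAR('a::{finite,field})" "q = CHAR('a) ^ e"
  shows "trace_qn q n ((x::'a) + y) = trace_qn q n x + trace_qn q n y"
  unfolding trace_qn_def by (simp add: frob_add[OF assms] sum.distrib)

lemma trace_frob:
  assumes "(x::'a::{finite,field}) ^ (q ^ n) = x"
  shows "trace_qn q n (x ^ q) = trace_qn q n x"
proof -
  have "trace_qn q n (x ^ q) = (\<Sum>i<n. x ^ (q ^ Suc i))"
    unfolding trace_qn_def by (simp add: power_mult mult.commute)
  also have "x + \<dots> = (\<Sum>i<Suc n. x ^ (q ^ i))"
    by (subst sum.lessThan_Suc_shift) simp
  also have "\<dots> = trace_qn q n x + x"
    using assms by (simp add: trace_qn_def)
  finally show ?thesis by (simp add: add.commute)
qed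

lemma trace_in:
  assumes "prime CHAR('a::{finite,field})" "q = CHAR('a) ^ e"
    and "(x::'a) ^ (q ^ n) = x"
  shows "trace_qn q n x ^ q = trace_qn q n x"
proof -
  have "trace_qn q n x ^ (q ^ 1) = (\<Sum>i<n. (x ^ (q ^ i)) ^ (q ^ 1))"
    unfolding trace_qn_def by (rule frob_sum[OF assms(1,2)])
  also have "\<dots> = trace_qn q n (x ^ q)"
    unfolding trace_qn_def by (simp add: mult.commute flip: power_mult)
  finally show ?thesis using trace_frob[OF assms(3)] by simp
qed

lemma trace_pow:
  assumes "\<And>y::'a::{finite,field}. y ^ (q ^ n) = y"
  shows "trace_qn q n ((x::'a) ^ (q ^ j)) = trace_qn q n x"
proof (induction j)
  case (Suc j)
  have "x ^ (q ^ Suc j) = (x ^ (q ^ j)) ^ q" by (metis power_Suc2 power_mult)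
  then show ?case using trace_frob[OF assms] Suc by simp
qed simp

lemma pow_fix:
  assumes "(c::'a::{finite,field}) ^ q = c"
  shows "c ^ (q ^ j) = c"
proof (induction j)
  case (Suc j)
  have "c ^ (q ^ Suc j) = (c ^ q) ^ (q ^ j)" by (simp add: power_mult mult.commute)
  then show ?case using assms Suc by simp
qed simp

lemma trace_smul:
  assumes "(c::'a::{finite,field}) ^ q = c"
  shows "trace_qn q n (c * w) = c * trace_qn q n w"
  unfolding trace_qn_def by (simp add: power_mult_distrib pow_fix[OF assms] sum_distrib_left)

lemma trace_sum:
  assumes "prime CHAR('a::{finite,field})" "q = CHAR('a) ^ e"
  shows "trace_qn q n (sum (g :: _ \<Rightarrow> 'a) A) = (\<Sum>a\<in>A. trace_qn q n (g a))"
  unfolding trace_qn_def by (simp add: frob_sum[OF assms] sum.swap[of _ A])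

lemma poly_N:
  fixes p :: "'a::{finite,field} poly"
  assumes "degree p < N"
  shows "poly p t = (\<Sum>i<N. coeff p i * t ^ i)"
proof -
  have "poly p t = (\<Sum>i<Suc (degree p). coeff p i * t ^ i)"
    by (simp add: poly_altdef lessThan_Suc_atMost)
  also have "\<dots> = (\<Sum>i<N. coeff p i * t ^ i)"
    by (rule sum.mono_neutral_left) (use assms in \<open>auto simp: coeff_eq_0\<close>)
  finally show ?thesis .
qed

lemma poly_over_fix:
  assumes "prime CHAR('a::{finite,field})" "q = CHAR('a) ^ e"
    and "poly_over (subfield_q q) p" "(t::'a) ^ q = t"
  shows "poly p t ^ q = poly p t"
proof -
  have "poly p t ^ (q ^ 1) = (\<Sum>i\<le>degree p. (coeff p i * t ^ i) ^ (q ^ 1))"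
    unfolding poly_altdef by (rule frob_sum[OF assms(1,2)])
  also have "\<dots> = poly p t"
    unfolding poly_altdef
  proof (intro sum.cong refl)
    fix i
    have "(t ^ i) ^ q = t ^ i" using assms(4) by (metis power_mult power_mult_distrib mult.commute)
    moreover have "coeff p i ^ q = coeff p i" using assms(3) by (auto simp: poly_over_def subfield_q_def)
    ultimately show "(coeff p i * t ^ i) ^ (q ^ 1) = coeff p i * t ^ i"
      by (simp add: power_mult_distrib)
  qed
  finally show ?thesis by simp
qed

lemma Phi_eq:
  "(monom 1 n - 1) div [:-1, 1:] = (\<Sum>i<n. monom (1::'a::field) i)"
proof -
  have X: "monom (1::'a) i = [:0,1:] ^ i" for i by (simp add: monom_altdef)
  have "monom (1::'a) n - 1 = ([:0,1:] - 1) * (\<Sum>i<n. [:0,1:] ^ i)"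
    by (simp only: X power_diff_1_eq)
  also have "[:0,1:] - 1 = [:-1, 1::'a:]" by (simp add: one_pCons)
  finally have eq: "monom (1::'a) n - 1 = [:-1, 1::'a:] * (\<Sum>i<n. monom 1 i)" by (simp only: X)
  show ?thesis by (simp only: eq) (rule nonzero_mult_div_cancel_left, simp)
qed

lemma Phi_coeff: "coeff (\<Sum>i<n. monom (1::'a::field) i) j = (if j < n then 1 else 0)"
  by (simp add: coeff_sum coeff_monom)

lemma Phi_lin:
  assumes "n > 0"
  shows "lin_assoc q (\<Sum>i<n. monom (1::'a::{finite,field}) i) z = trace_qn q n z"
proof -
  have "degree (\<Sum>i<n. monom (1::'a) i) \<le> n - 1"
    by (rule degree_le) (auto simp: Phi_coeff)
  hence "degree (\<Sum>i<n. monom (1::'a) i) < n" using assms by linarith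
  thus ?thesis by (simp add: lin_assoc_N Phi_coeff trace_qn_def)
qed


lemma bezout_poly:
  fixes a b :: "'a::field poly"
  assumes cop: "coprime a b" and b0: "b \<noteq> 0"
  shows "\<exists>u v. u * a + v * b = 1"
proof -
  define J where "J = {m. \<exists>u v. m = u * a + v * b}"
  have aJ: "a \<in> J" unfolding J_def by (rule CollectI, rule exI[of _ 1], rule exI[of _ 0]) simp
  have bJ: "b \<in> J" unfolding J_def by (rule CollectI, rule exI[of _ 0], rule exI[of _ 1]) simp
  define d where "d = (LEAST d. \<exists>m\<in>J. m \<noteq> 0 \<and> degree m = d)"
  have ex: "\<exists>m\<in>J. m \<noteq> 0 \<and> degree m = d"
    unfolding d_def by (rule LeastI[of _ "degree b"]) (use bJ b0 in blast)
  then obtain m where m: "m \<in> J" "m \<noteq> 0" "degree m = d" by blast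
  have mind: "\<And>r. r \<in> J \<Longrightarrow> r \<noteq> 0 \<Longrightarrow> d \<le> degree r"
    unfolding d_def by (rule Least_le) blast
  have dv: "m dvd x" if xJ: "x \<in> J" for x
  proof -
    obtain u v where x: "x = u * a + v * b" using xJ unfolding J_def by blast
    obtain u0 v0 where m0: "m = u0 * a + v0 * b" using m(1) unfolding J_def by blast
    have "x mod m = x - (x div m) * m" by (simp add: minus_div_mult_eq_mod)
    also have "\<dots> = (u - (x div m) * u0) * a + (v - (x div m) * v0) * b"
      by (simp add: x m0 algebra_simps)
    finally have "x mod m \<in> J" unfolding J_def by blast
    moreover have "x mod m \<noteq> 0 \<Longrightarrow> degree (x mod m) < degree m"
      by (rule degree_mod_less'[OF m(2)])
    ultimately have "x mod m = 0" using mind m(3) by fastforce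
    thus ?thesis by (simp add: mod_eq_0_iff_dvd)
  qed
  have "is_unit m" using cop dv[OF aJ] dv[OF bJ] by (rule coprime_common_divisor)
  then obtain w where w: "1 = m * w" by (elim dvdE)
  obtain u0 v0 where m0: "m = u0 * a + v0 * b" using m(1) unfolding J_def by blast
  have "(w * u0) * a + (w * v0) * b = 1" using w by (simp add: m0 algebra_simps)
  thus ?thesis by blast
qed

theorem theorem3p5:
  fixes q n :: nat
    and b h k f :: "'a::{finite,field} poly"
  assumes q_pp: "\<exists>p e. prime p \<and> e > 0 \<and> q = p ^ e"
    and n_pos: "n > 0"
    and card: "card (UNIV :: 'a set) = q ^ n"
    and b_over: "poly_over (subfield_q q) b"
    and h_over: "poly_over (subfield_q q) h"
    and k_over: "poly_over (subfield_q q) k"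
    and b_perm: "bij_betw (poly b) (subfield_q q) (subfield_q q)"
    and h_coprime: "coprime h ((monom 1 n - 1) div [:-1, 1:])"
    and k_nonzero: "poly k ` subfield_q q \<subseteq> subfield_q q - {0}"
    and f_cong: "(monom 1 q - [:0, 1:]) dvd
                   (trace_poly q n f - (b - smult (poly h 1) (k * [:0, 1:])))"
  shows "bij (\<lambda>x. poly f (trace_qn q n x) + poly k (trace_qn q n x) * lin_assoc q h x)"
proof -
  obtain p e where pe: "prime p" "e > 0" "q = p ^ e" using q_pp by blast
  have card': "card (UNIV :: 'a set) = p ^ (e * n)" using card pe by (simp add: power_mult)
  have chp: "CHAR('a) = p" by (rule ff_char[OF pe(1) card']) (use pe n_pos in simp)
  have pr: "prime CHAR('a)" using chp pe by simp
  have qe: "q = CHAR('a) ^ e" using chp pe by simp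
  have qpos: "q > 0" using pe prime_gt_0_nat by simp
  have fix_all: "\<And>y::'a. y ^ (q ^ n) = y" using ff_pow_card card by metis
  define Tr where "Tr = (trace_qn q n :: 'a \<Rightarrow> 'a)"
  define L where "L = lin_assoc q h"
  define P where "P = (\<lambda>x. poly f (Tr x) + poly k (Tr x) * L x)"
  have Tr_in: "Tr x ^ q = Tr x" for x
    unfolding Tr_def by (rule trace_in[OF pr qe fix_all])
  have key: "Tr (P x) = poly b (Tr x)" for x
  proof -
    define t where "t = Tr x"
    have t: "t ^ q = t" unfolding t_def by (rule Tr_in)
    have tpow: "(t ^ i) ^ q = t ^ i" for i using t by (metis power_mult mult.commute)
    have kt: "poly k t ^ q = poly k t" by (rule poly_over_fix[OF pr qe k_over t])
    define N where "N = Suc (degree f)"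
    have A: "Tr (poly f t) = poly (trace_poly q n f) t"
    proof -
      have "Tr (poly f t) = Tr (\<Sum>i<N. coeff f i * t ^ i)"
        by (subst poly_N[where N = N]) (auto simp: N_def)
      also have "\<dots> = (\<Sum>i<N. Tr (t ^ i * coeff f i))"
        unfolding Tr_def by (simp add: trace_sum[OF pr qe] mult.commute)
      also have "\<dots> = (\<Sum>i<N. t ^ i * Tr (coeff f i))"
        unfolding Tr_def by (intro sum.cong refl trace_smul tpow)
      also have "\<dots> = poly (trace_poly q n f) t"
      proof -
        have z: "trace_qn q n (0::'a) = 0" using qpos by (simp add: trace_qn_def power_0_left)
        have "degree (trace_poly q n f) \<le> degree f"
          by (rule degree_le) (auto simp: trace_poly_def coeff_map_poly z coeff_eq_0)
        hence "degree (trace_poly q n f) < N" unfolding N_def by linarith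
        with z show ?thesis
          by (subst poly_N[where N = N]) (auto simp: trace_poly_def Tr_def mult.commute coeff_map_poly)
      qed
      finally show ?thesis .
    qed
    have B: "Tr (L x) = poly h 1 * t"
    proof -
      have "Tr (L x) = (\<Sum>i\<le>degree h. Tr (coeff h i * x ^ (q ^ i)))"
        unfolding L_def lin_assoc_def Tr_def by (rule trace_sum[OF pr qe])
      also have "\<dots> = (\<Sum>i\<le>degree h. coeff h i * t)"
      proof (intro sum.cong refl)
        fix i
        have "coeff h i ^ q = coeff h i" using h_over by (auto simp: poly_over_def subfield_q_def)
        then show "Tr (coeff h i * x ^ (q ^ i)) = coeff h i * t"
          unfolding Tr_def t_def by (simp add: trace_smul trace_pow[OF fix_all])
      qed
      also have "\<dots> = poly h 1 * t" by (simp add: poly_altdef sum_distrib_right)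
      finally show ?thesis .
    qed
    have C: "poly (trace_poly q n f) t = poly b t - poly h 1 * (poly k t * t)"
    proof -
      obtain r where r: "trace_poly q n f - (b - smult (poly h 1) (k * [:0, 1:])) =
                         (monom 1 q - [:0, 1:]) * r" using f_cong by (elim dvdE)
      have "poly (monom 1 q - [:0, 1:]) t = 0" using t by (simp add: poly_monom)
      hence "poly (trace_poly q n f - (b - smult (poly h 1) (k * [:0, 1:]))) t = 0"
        by (simp only: r poly_mult) simp
      thus ?thesis by (simp add: algebra_simps)
    qed
    have "Tr (P x) = Tr (poly f t) + Tr (poly k t * L x)"
      unfolding P_def t_def Tr_def by (rule trace_add[OF pr qe])
    also have "Tr (poly k t * L x) = poly k t * Tr (L x)"
      unfolding Tr_def by (rule trace_smul[OF kt])
    finally show ?thesis using A B C by (simp add: t_def algebra_simps)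
  qed
  define Phi where "Phi = (monom 1 n - 1) div [:-1, 1::'a:]"
  have Phi_over: "poly_over (subfield_q q) Phi"
    unfolding Phi_def Phi_eq poly_over_def subfield_q_def Phi_coeff using qpos by auto
  have PhiTr: "lin_assoc q Phi z = Tr z" for z
    unfolding Phi_def Phi_eq Tr_def by (rule Phi_lin[OF n_pos])
  obtain u v where uv: "u * h + v * Phi = 1"
  proof -
    have "Phi \<noteq> 0"
    proof
      assume "Phi = 0"
      hence "coeff Phi 0 = 0" by simp
      thus False using n_pos unfolding Phi_def Phi_eq Phi_coeff by simp
    qed
    then show ?thesis using bezout_poly[of h Phi] h_coprime that unfolding Phi_def by blast
  qed
  have "inj P"
  proof (rule injI)
    fix x y assume eq: "P x = P y"
    have sx: "Tr x \<in> subfield_q q" "Tr y \<in> subfield_q q"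
      using Tr_in by (auto simp: subfield_q_def)
    have "poly b (Tr x) = poly b (Tr y)" using key eq by metis
    hence tt: "Tr x = Tr y"
      using bij_betw_imp_inj_on[OF b_perm] sx by (auto dest: inj_onD)
    have "poly k (Tr x) \<noteq> 0" using k_nonzero sx by auto
    hence LL: "L x = L y" using eq tt unfolding P_def by simp
    define z where "z = x - y"
    have xz: "x = z + y" unfolding z_def by simp
    have Lz: "L z = 0" using LL unfolding xz L_def by (simp add: lin_assoc_zadd[OF pr qe])
    have Tz: "Tr z = 0" using tt unfolding xz Tr_def by (simp add: trace_add[OF pr qe])
    have "z = lin_assoc q (u * h + v * Phi) z" by (simp add: uv lin_assoc_one)
    also have "\<dots> = lin_assoc q u (L z) + lin_assoc q v (lin_assoc q Phi z)"
      unfolding L_def by (simp add: lin_assoc_add lin_assoc_comp[OF pr qe h_over]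
                                    lin_assoc_comp[OF pr qe Phi_over])
    also have "\<dots> = 0" by (simp add: Lz PhiTr Tz lin_assoc_z0[OF qpos])
    finally show "x = y" unfolding z_def by simp
  qed
  thus ?thesis unfolding P_def Tr_def L_def by (simp add: bij_def finite_UNIV_inj_surj)
qed

end
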